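(* Let $k\ge 4$ and $n\ge 2$ be integers, and let $\ket{a_1},\dots,\ket{a_n},\ket{b_1},\dots,\ket{b_n}\in\mathbb{C}^k$ be vectors such that the set $\{\ket{a_1},\dots,\ket{a_n},\ket{b_1},\dots,\ket{b_n}\}$ is linearly independent (so $2n\le k$). Put $\ket{v}=\sum_{i=1}^n \ket{a_i}\otimes\ket{b_i}\in\mathbb{C}^k\otimes\mathbb{C}^k$ and, for $\varepsilon>0$, $$\gamma_\varepsilon=\mathbb{I}+\mathbb{F}+\varepsilon\,\ket{v}\!\bra{v},$$ where $\mathbb{I}$ is the identity on $\mathbb{C}^k\otimes\mathbb{C}^k$ and $\mathbb{F}=\sum_{i,j=1}^k\ket{i}\!\bra{j}\otimes\ket{j}\!\bra{i}$ is the swap operator. Then there exists $\varepsilon_0>0$ such that for every $0<\varepsilon<\varepsilon_0$, the normalized state $\gamma_\varepsilon/\mathrm{Tr}(\gamma_\varepsilon)$ is entangled, has positive semidefinite partial transpose (i.e. it is a PPT entangled, or bound entangled, state), and its realignment $\mathcal{R}(\gamma_\varepsilon)$ is an invertible matrix (i.e. the state is faithful and hence can serve as a probe state for ancilla-assisted quantum process tomography).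
   Context: $\{\ket{i}\}_{i=1}^k$ is the computational basis of $\mathbb{C}^k$. For an operator $\rho=\sum_{i,j,k,l}\rho_{ij,kl}\,\ket{i}\!\bra{j}\otimes\ket{k}\!\bra{l}$ on $\mathbb{C}^k\otimes\mathbb{C}^k$, the realignment is $\mathcal{R}(\rho)=\sum_{i,j,k,l}\rho_{ij,kl}\,\ket{i}\!\bra{k}\otimes\ket{j}\!\bra{l}$. The partial transpose $\rho^\Gamma$ is the transpose on the second tensor factor in the computational basis. A bipartite state is called faithful if $\mathcal{R}(\rho)$ has no zero singular values (is invertible); faithfulness is the condition under which the state can replace the maximally entangled state in ancilla-assisted quantum process tomography. A state is entangled if it is not a convex combination of product states. *)

theory Defs
  imports "HOL-Analysis.Analysis"
begin

text \<open>Operators on C^k (x) C^k are matrices indexed by the finite type 'k \<times> 'k,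
  where the pair (i,k) stands for the basis vector |i> (x) |k>.\<close>

type_synonym ('k) bimat = "complex ^ ('k \<times> 'k) ^ ('k \<times> 'k)"

definition mtrace :: "complex ^ 'n ^ 'n \<Rightarrow> complex" where
  "mtrace M = (\<Sum>i\<in>UNIV. M $ i $ i)"

definition psd :: "complex ^ 'n ^ 'n \<Rightarrow> bool" where
  "psd M \<longleftrightarrow> (\<forall>x :: complex ^ 'n.
     let q = (\<Sum>i\<in>UNIV. cnj (x $ i) * (M *v x) $ i) in Im q = 0 \<and> Re q \<ge> 0)"

definition density :: "complex ^ 'n ^ 'n \<Rightarrow> bool" where
  "density M \<longleftrightarrow> psd M \<and> mtrace M = 1"

definition kron :: "complex ^ 'k::finite ^ 'k \<Rightarrow> complex ^ 'k ^ 'k \<Rightarrow> 'k bimat" where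
  "kron A B = (\<chi> p q. A $ fst p $ fst q * B $ snd p $ snd q)"

definition separable :: "('k::finite) bimat \<Rightarrow> bool" where
  "separable \<rho> \<longleftrightarrow> (\<exists>(m::nat) (p :: nat \<Rightarrow> real) \<sigma> \<tau>.
      (\<forall>j<m. p j \<ge> 0 \<and> density (\<sigma> j) \<and> density (\<tau> j)) \<and>
      (\<Sum>j<m. p j) = 1 \<and>
      \<rho> = (\<Sum>j<m. (\<chi> r s. complex_of_real (p j) * kron (\<sigma> j) (\<tau> j) $ r $ s)))"

definition entangled :: "('k::finite) bimat \<Rightarrow> bool" where
  "entangled \<rho> \<longleftrightarrow> density \<rho> \<and> \<not> separable \<rho>"

definition ptrans :: "('k::finite) bimat \<Rightarrow> 'k bimat" where
  "ptrans M = (\<chi> r s. M $ (fst r, snd s) $ (fst s, snd r))"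

definition realign :: "('k::finite) bimat \<Rightarrow> 'k bimat" where
  "realign M = (\<chi> r s. M $ (fst r, fst s) $ (snd r, snd s))"

definition swap_op :: "('k::finite) bimat" where
  "swap_op = (\<chi> r s. if fst r = snd s \<and> snd r = fst s then 1 else 0)"

definition ketbra :: "complex ^ 'n \<Rightarrow> complex ^ 'n ^ 'n" where
  "ketbra v = (\<chi> r s. v $ r * cnj (v $ s))"

definition tensor_vec :: "complex ^ 'k::finite \<Rightarrow> complex ^ 'k \<Rightarrow> complex ^ ('k \<times> 'k)" where
  "tensor_vec a b = (\<chi> p. a $ fst p * b $ snd p)"

definition gamma :: "nat \<Rightarrow> (nat \<Rightarrow> complex ^ 'k::finite) \<Rightarrow> (nat \<Rightarrow> complex ^ 'k) \<Rightarrow> real \<Rightarrow> 'k bimat" where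
  "gamma n a b \<epsilon> = (let v = (\<Sum>i<n. tensor_vec (a i) (b i)) in
      mat 1 + swap_op + (\<chi> r s. complex_of_real \<epsilon> * ketbra v $ r $ s))"

definition normalize_op :: "complex ^ 'n ^ 'n \<Rightarrow> complex ^ 'n ^ 'n" where
  "normalize_op M = (\<chi> r s. M $ r $ s / mtrace M)"

end

theory Submission
  imports Defs
begin


definition qf :: "complex^'n^'n \<Rightarrow> complex^'n \<Rightarrow> complex" where
  "qf M x = (\<Sum>i\<in>UNIV. cnj (x$i) * (M *v x)$i)"

definition ip :: "complex^'n \<Rightarrow> complex^'n \<Rightarrow> complex" where
  "ip y x = (\<Sum>i\<in>UNIV. cnj (y$i) * x$i)"

lemma psd_qf: "psd M \<longleftrightarrow> (\<forall>x. Im (qf M x) = 0 \<and> Re (qf M x) \<ge> 0)"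
  by (simp add: psd_def qf_def Let_def)

lemma qf_expand: "qf M x = (\<Sum>i\<in>UNIV. \<Sum>j\<in>UNIV. cnj (x$i) * M$i$j * x$j)"
  unfolding qf_def matrix_vector_mult_def by (simp add: sum_distrib_left mult.assoc)

lemma qf_add: "qf (A + B) x = qf A x + qf B x"
  unfolding qf_expand by (simp add: distrib_left distrib_right sum.distrib)

lemma qf_diff: "qf (A - B) x = qf A x - qf B x"
  unfolding qf_expand by (simp add: algebra_simps sum_subtractf)

lemma qf_scale: "qf (\<chi> r s. c * A$r$s) x = c * qf A x"
  unfolding qf_expand by (simp add: sum_distrib_left algebra_simps)

lemma qf_div: "qf (\<chi> r s. A$r$s / c) x = qf A x / c"
  unfolding qf_expand by (simp add: sum_divide_distrib)

lemma qf_sum: "qf (\<Sum>j\<in>J. A j) x = (\<Sum>j\<in>J. qf (A j) x)"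
proof (induction J rule: infinite_finite_induct)
  case (infinite A) then show ?case by (simp add: qf_expand)
next
  case empty then show ?case by (simp add: qf_expand)
next
  case (insert j F) then show ?case by (simp add: qf_add)
qed

lemma qf_ketbra: "qf (ketbra y) x = cnj (ip y x) * ip y x"
  unfolding qf_expand ip_def ketbra_def
  by (simp add: sum_distrib_left sum_distrib_right algebra_simps sum_product)

lemma qf_mat1: "qf (mat 1) x = (\<Sum>i\<in>UNIV. cnj (x$i) * x$i)"
  unfolding qf_def by simp

lemma mult_if0: "c * (if P then a else 0) = (if P then c * a else (0::complex))"
  "(if P then a else 0) * c = (if P then a * c else (0::complex))"
  "cnj (if P then a else 0) = (if P then cnj a else 0)" by auto

lemma comp_two: "(a *s axis i 1 + b *s axis j 1)$l = (if l = i then a else 0) + (if l = j then (b::complex) else 0)"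
  by (simp add: axis_def)

lemma comp_one: "(a *s axis i 1)$l = (if l = i then (a::complex) else 0)"
  by (simp add: axis_def)

lemma qf_two:
  assumes "i \<noteq> j"
  shows "qf M (a *s axis i 1 + b *s axis j 1) =
     cnj a * M$i$i * a + cnj a * M$i$j * b + cnj b * M$j$i * a + cnj b * M$j$j * b"
proof -
  have mv: "(M *v (a *s axis i 1 + b *s axis j 1))$k = M$k$i * a + M$k$j * b" for k
    unfolding matrix_vector_mult_def comp_two
    by (simp add: distrib_left sum.distrib mult_if0 sum.delta)
  show ?thesis unfolding qf_def mv comp_two
    using assms by (simp add: distrib_left distrib_right sum.distrib mult_if0 sum.delta )
qed

lemma qf_one: "qf M (a *s axis i 1) = cnj a * M$i$i * a"
proof -
  have mv: "(M *v (a *s axis i 1))$k = M$k$i * a" for k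
    unfolding matrix_vector_mult_def comp_one
    by (simp add: mult_if0 sum.delta)
  show ?thesis unfolding qf_def mv comp_one
    by (simp add: mult_if0 sum.delta )
qed



lemma psd_herm:
  assumes "psd M" shows "M$j$i = cnj (M$i$j)"
proof -
  have re: "Im (qf M x) = 0" "Re (qf M x) \<ge> 0" for x using assms by (auto simp: psd_qf)
  have d: "Im (M$k$k) = 0" for k using re(1)[of "1 *s axis k 1"] qf_one[of M 1 k] by simp
  show ?thesis
  proof (cases "i = j")
    case True then show ?thesis using d[of i] by (simp add: complex_eq_iff)
  next
    case False
    have 1: "Im (M$i$j) + Im (M$j$i) = 0"
      using re(1)[of "1 *s axis i 1 + 1 *s axis j 1"] qf_two[OF False, of M 1 1] d[of i] d[of j] by simp
    have 2: "Re (M$i$j) - Re (M$j$i) = 0"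
      using re(1)[of "1 *s axis i 1 + \<i> *s axis j 1"] qf_two[OF False, of M 1 \<i>] d[of i] d[of j] by simp
    show ?thesis using 1 2 by (simp add: complex_eq_iff)
  qed
qed

lemma psd_herm': assumes "psd M" shows "cnj (M$i$j) = M$j$i"
  using psd_herm[OF assms, of j i] by simp

lemma psd_diag: assumes "psd M" shows "M$i$i = of_real (Re (M$i$i))" "Re (M$i$i) \<ge> 0"
proof -
  have "Im (qf M (1 *s axis i 1)) = 0" "Re (qf M (1 *s axis i 1)) \<ge> 0" using assms by (auto simp: psd_qf)
  then show "M$i$i = of_real (Re (M$i$i))" "Re (M$i$i) \<ge> 0" using qf_one[of M 1 i] by (auto simp: complex_eq_iff)
qed

lemma qf_plus: "qf M (x + y) = qf M x + qf M y + (\<Sum>r\<in>UNIV. cnj (x$r) * (M *v y)$r) + (\<Sum>r\<in>UNIV. cnj (y$r) * (M *v x)$r)"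
  unfolding qf_def by (simp add: matrix_vector_right_distrib algebra_simps sum.distrib)

lemma ketbra_zero: "ketbra 0 = 0"
  by (simp add: ketbra_def vec_eq_iff)

lemma zero_row:
  assumes "psd M" "M$i$i = 0"
  shows "M$i$j = 0"
proof (rule ccontr)
  assume ne: "M$i$j \<noteq> 0"
  then have ij: "i \<noteq> j" using assms(2) by auto
  define s where "s = M$i$j"
  define n where "n = (Re s)^2 + (Im s)^2"
  have "n = (cmod s)^2" by (simp add: n_def cmod_power2)
  then have npos: "n > 0" using ne s_def by simp
  define r where "r = - (Re (M$j$j) + 1) / (2 * n)"
  have h: "M$j$i = cnj s" using psd_herm'[OF assms(1), of i j] s_def by simp
  define t where "t = of_real r * s"
  have q: "qf M (t *s axis i 1 + 1 *s axis j 1) = cnj t * M$i$i * t + cnj t * M$i$j * 1 + cnj 1 * M$j$i * t + cnj 1 * M$j$j * 1"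
    by (rule qf_two[OF ij])
  have cs: "cnj s * s = of_real n" using complex_mult_cnj[of s] by (simp add: n_def mult.commute)
  have e1: "cnj t * M$i$j * 1 = of_real (r * n)" unfolding s_def[symmetric] t_def
    using cs by (simp add: mult.assoc)
  have e2: "cnj 1 * M$j$i * t = of_real (r * n)" unfolding h t_def
    using cs by (simp add: mult.commute mult.left_commute)
  have "Re (qf M (t *s axis i 1 + 1 *s axis j 1)) \<ge> 0" using assms(1) psd_qf by blast
  also have "Re (qf M (t *s axis i 1 + 1 *s axis j 1)) = 2 * r * n + Re (M$j$j)"
    unfolding q e1 e2 assms(2) by simp
  also have "\<dots> = -1" using npos unfolding r_def by (simp add: field_simps)
  finally show False by simp
qed

lemma gram_aux:
  fixes S :: "'n::finite set"
  shows "finite S \<Longrightarrow> \<forall>\<sigma>::complex^'n^'n. psd \<sigma> \<longrightarrow> (\<forall>i j. (i \<notin> S \<or> j \<notin> S) \<longrightarrow> \<sigma>$i$j = 0) \<longrightarrow> (\<exists>c. \<sigma> = (\<Sum>t\<in>S. ketbra (c t)))"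
proof (induction S rule: finite_induct)
  case empty
  then show ?case by (auto simp: vec_eq_iff)
next
  case (insert i S)
  show ?case
  proof (intro allI impI)
    fix \<sigma> :: "complex^'n^'n"
    assume psd: "psd \<sigma>" and supp: "\<forall>a b. (a \<notin> insert i S \<or> b \<notin> insert i S) \<longrightarrow> \<sigma>$a$b = 0"
    show "\<exists>c. \<sigma> = (\<Sum>t\<in>insert i S. ketbra (c t))"
    proof (cases "\<sigma>$i$i = 0")
      case True
      have r0: "\<sigma>$i$j = 0" for j using zero_row[OF psd True] .
      have c0: "\<sigma>$j$i = 0" for j using psd_herm[OF psd, of i j] r0[of j] by simp
      have "\<forall>a b. (a \<notin> S \<or> b \<notin> S) \<longrightarrow> \<sigma>$a$b = 0"
      proof (intro allI impI)
        fix a b assume "a \<notin> S \<or> b \<notin> S"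
        then show "\<sigma>$a$b = 0" using supp r0 c0 by (cases "a = i"; cases "b = i") auto
      qed
      then obtain c where c: "\<sigma> = (\<Sum>t\<in>S. ketbra (c t))" using insert.IH psd by blast
      have "(\<Sum>t\<in>insert i S. ketbra ((c(i:=0)) t)) = (\<Sum>t\<in>S. ketbra ((c(i:=0)) t))"
        using insert.hyps by (simp add: ketbra_zero)
      also have "\<dots> = (\<Sum>t\<in>S. ketbra (c t))" using insert.hyps by (intro sum.cong) auto
      finally show ?thesis using c by metis
    next
      case False
      define d where "d = Re (\<sigma>$i$i)"
      have dd: "\<sigma>$i$i = of_real d" using psd_diag[OF psd] d_def by auto
      have "d \<noteq> 0" using False dd by auto
      then have dpos: "d > 0" using psd_diag(2)[OF psd, of i] d_def by linarith
      define col where "col = (\<chi> r. \<sigma>$r$i / of_real (sqrt d))"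
      define \<sigma>' where "\<sigma>' = \<sigma> - ketbra col"
      have kb: "ketbra col $ a $ b = \<sigma>$a$i * \<sigma>$i$b / of_real d" for a b
      proof -
        have "ketbra col $ a $ b = \<sigma>$a$i * cnj (\<sigma>$b$i) / (of_real (sqrt d) * of_real (sqrt d))"
          by (simp add: ketbra_def col_def)
        also have "of_real (sqrt d) * of_real (sqrt d) = (of_real d :: complex)"
          using dpos by (simp flip: of_real_mult)
        finally show ?thesis using psd_herm[OF psd, of b i] by simp
      qed
      have supp': "\<forall>a b. (a \<notin> S \<or> b \<notin> S) \<longrightarrow> \<sigma>'$a$b = 0"
      proof (intro allI impI)
        fix a b assume ab: "a \<notin> S \<or> b \<notin> S"
        show "\<sigma>'$a$b = 0"
        proof (cases "a = i \<or> b = i")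
          case True
          then show ?thesis using dpos dd unfolding \<sigma>'_def by (auto simp: kb)
        next
          case False
          then have "\<sigma>$a$b = 0" "\<sigma>$a$i * \<sigma>$i$b = 0" using ab supp by auto
          then show ?thesis unfolding \<sigma>'_def by (simp add: kb)
        qed
      qed
      have psd': "psd \<sigma>'"
        unfolding psd_qf
      proof
        fix x
        define g where "g = (\<sigma> *v x)$i"
        define t where "t = - g / of_real d"
        have ipc: "ip col x = g / of_real (sqrt d)"
          unfolding ip_def col_def g_def matrix_vector_mult_def
          using psd_herm'[OF psd]
          by (simp add: sum_divide_distrib mult.commute)
        have q1: "qf \<sigma>' x = qf \<sigma> x - cnj g * g / of_real d"
        proof -
          have "of_real (sqrt d) * of_real (sqrt d) = (of_real d :: complex)"
            using dpos by (simp flip: of_real_mult)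
          then show ?thesis unfolding \<sigma>'_def qf_diff qf_ketbra ipc by simp
        qed
        have s1: "(\<Sum>r\<in>UNIV. cnj (x$r) * (\<sigma> *v (t *s axis i 1))$r) = cnj g * t"
        proof -
          have "(\<sigma> *v (t *s axis i 1))$r = \<sigma>$r$i * t" for r
            unfolding matrix_vector_mult_def comp_one by (simp add: mult_if0 sum.delta)
          then have "(\<Sum>r\<in>UNIV. cnj (x$r) * (\<sigma> *v (t *s axis i 1))$r) = (\<Sum>r\<in>UNIV. cnj (\<sigma>$i$r * x$r)) * t"
            using psd_herm'[OF psd] by (simp add: sum_distrib_right sum_distrib_left mult.commute mult.left_commute)
          also have "\<dots> = cnj g * t" unfolding g_def matrix_vector_mult_def by simp
          finally show ?thesis .
        qed
        have s2: "(\<Sum>r\<in>UNIV. cnj ((t *s axis i 1)$r) * (\<sigma> *v x)$r) = cnj t * g"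
          unfolding comp_one g_def by (simp add: mult_if0 sum.delta)
        have "qf \<sigma> (x + t *s axis i 1) = qf \<sigma> x + cnj t * of_real d * t + cnj g * t + cnj t * g"
          unfolding qf_plus s1 s2 qf_one dd by simp
        also have "\<dots> = qf \<sigma>' x" unfolding q1 t_def using dpos by (simp add: field_simps)
        finally have "qf \<sigma>' x = qf \<sigma> (x + t *s axis i 1)" by simp
        then show "Im (qf \<sigma>' x) = 0 \<and> 0 \<le> Re (qf \<sigma>' x)" using psd by (simp add: psd_qf)
      qed
      obtain c where c: "\<sigma>' = (\<Sum>t\<in>S. ketbra (c t))" using insert.IH psd' supp' by blast
      have "(\<Sum>t\<in>insert i S. ketbra ((c(i:=col)) t)) = ketbra col + (\<Sum>t\<in>S. ketbra ((c(i:=col)) t))"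
        using insert.hyps by simp
      also have "(\<Sum>t\<in>S. ketbra ((c(i:=col)) t)) = (\<Sum>t\<in>S. ketbra (c t))" using insert.hyps by (intro sum.cong) auto
      finally have "(\<Sum>t\<in>insert i S. ketbra ((c(i:=col)) t)) = \<sigma>" using c unfolding \<sigma>'_def by (metis add.commute diff_add_cancel)
      then show ?thesis by metis
    qed
  qed
qed

lemma gram:
  fixes \<sigma> :: "complex^'n^'n"
  assumes "psd \<sigma>" shows "\<exists>c::'n \<Rightarrow> complex^'n. \<sigma> = (\<Sum>t\<in>UNIV. ketbra (c t))"
proof -
  have "finite (UNIV::'n set)" by simp
  from gram_aux[OF this] assms show ?thesis by auto
qed



definition dot :: "complex^'n \<Rightarrow> complex^'n \<Rightarrow> complex" where
  "dot f x = (\<Sum>p\<in>UNIV. f$p * x$p)"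

definition asym :: "complex^('k::finite \<times> 'k) \<Rightarrow> bool" where
  "asym z \<longleftrightarrow> (\<forall>p q. z$(p,q) = - z$(q,p))"

definition As :: "complex^('k::finite \<times> 'k) \<Rightarrow> complex^('k \<times> 'k)" where
  "As u = (\<chi> r. (u$r - u$(snd r, fst r)) / 2)"

definition bl :: "complex^'k::finite \<Rightarrow> complex^'k \<Rightarrow> complex^('k \<times> 'k) \<Rightarrow> complex" where
  "bl f g M = (\<Sum>r\<in>UNIV. f$(fst r) * g$(snd r) * M$r)"

definition pf :: "complex^'k::finite \<Rightarrow> complex^'k \<Rightarrow> complex^'k \<Rightarrow> complex^'k \<Rightarrow> complex^('k \<times> 'k) \<Rightarrow> complex" where
  "pf f1 f2 f3 f4 M = bl f1 f2 M * bl f3 f4 M - bl f1 f3 M * bl f2 f4 M + bl f1 f4 M * bl f2 f3 M"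

lemma sum_swap_idx: "(\<Sum>r\<in>UNIV. f (snd r, fst r)) = (\<Sum>r\<in>(UNIV::('a::finite \<times> 'a) set). f r)"
  by (rule sum.reindex_bij_witness[of _ prod.swap prod.swap]) auto

lemma asym_As: "asym (As u)"
  unfolding asym_def As_def by (simp add: field_simps)

lemma ip_As:
  assumes "asym z" shows "ip u z = ip (As u) z"
proof -
  have "(\<Sum>r\<in>UNIV. cnj (u$(snd r, fst r)) * z$r) = (\<Sum>r\<in>UNIV. cnj (u$r) * z$(snd r, fst r))"
    using sum_swap_idx[of "\<lambda>r. cnj (u$r) * z$(snd r, fst r)"] by simp
  also have "\<dots> = - ip u z"
  proof -
    have zz: "z$(snd r, fst r) = - z$r" for r using assms unfolding asym_def by (metis prod.collapse)
    show ?thesis unfolding ip_def zz by (simp add: sum_negf[symmetric])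
  qed
  finally have h: "(\<Sum>r\<in>UNIV. cnj (u$(snd r, fst r)) * z$r) = - ip u z" .
  have "ip (As u) z = (ip u z - (\<Sum>r\<in>UNIV. cnj (u$(snd r, fst r)) * z$r)) / 2"
    unfolding ip_def As_def by (simp add: diff_divide_distrib sum_divide_distrib sum_subtractf algebra_simps)
  then show ?thesis using h by simp
qed

lemma ip_self: "ip z z = of_real (\<Sum>r\<in>UNIV. (cmod (z$r))^2)"
  unfolding ip_def of_real_sum by (intro sum.cong refl) (metis complex_norm_square mult.commute)

lemma ip_self_zero: assumes "ip z z = 0" shows "z = 0"
proof -
  have "(\<Sum>r\<in>UNIV. (cmod (z$r))^2) = 0" using assms ip_self[of z] by (metis of_real_eq_0_iff)
  then have "\<forall>r\<in>UNIV. (cmod (z$r))^2 = 0" by (subst sum_nonneg_eq_0_iff[symmetric]) auto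
  then show ?thesis by (simp add: vec_eq_iff)
qed

lemma ip_right_lin: "ip y (x1 - c *s x2) = ip y x1 - c * ip y x2"
  unfolding ip_def by (simp add: algebra_simps sum_subtractf sum_distrib_left)

lemma ip_left_lin: "ip (x1 - c *s x2) z = ip x1 z - cnj c * ip x2 z"
  unfolding ip_def by (simp add: algebra_simps sum_subtractf sum_distrib_left)

lemma ip_left_scale: "ip (c *s x) z = cnj c * ip x z"
  unfolding ip_def by (simp add: algebra_simps sum_distrib_left)

lemma asym_diff:
  assumes "asym x" "asym y" shows "asym (x - c *s y)"
  unfolding asym_def
proof (intro allI)
  fix p q
  have "x$(p,q) = - x$(q,p)" "y$(p,q) = - y$(q,p)" using assms unfolding asym_def by blast+
  then show "(x - c *s y)$(p,q) = - (x - c *s y)$(q,p)" by (simp add: algebra_simps)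
qed

lemma proj_lemma:
  assumes w: "asym w" "w \<noteq> 0"
    and h: "\<forall>z. asym z \<and> ip w z = 0 \<longrightarrow> ip u z = 0"
  shows "\<exists>c. As u = c *s w"
proof -
  have ww: "ip w w \<noteq> 0" using ip_self_zero w(2) by blast
  define c where "c = ip w (As u) / ip w w"
  define z where "z = As u - c *s w"
  have az: "asym z" unfolding z_def by (intro asym_diff asym_As w)
  have wz: "ip w z = 0" unfolding z_def ip_right_lin c_def using ww by simp
  have "ip z z = ip (As u) z - cnj c * ip w z" unfolding z_def ip_left_lin ..
  also have "\<dots> = ip u z" using wz ip_As[OF az] by simp
  also have "\<dots> = 0" using h az wz by blast
  finally have "z = 0" by (rule ip_self_zero)
  then show ?thesis unfolding z_def by auto
qed

lemma bl_tv: "bl f g (tensor_vec x y) = dot f x * dot g y"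
  unfolding bl_def dot_def tensor_vec_def
  by (simp add: sum_product UNIV_Times_UNIV[symmetric] sum.cartesian_product algebra_simps case_prod_unfold del: UNIV_Times_UNIV)

lemma bl_As: "bl f g (As M) = (bl f g M - bl g f M) / 2"
proof -
  have "(\<Sum>r\<in>UNIV. f$(fst r) * g$(snd r) * M$(snd r, fst r)) = bl g f M"
    unfolding bl_def using sum_swap_idx[of "\<lambda>r. f$(snd r) * g$(fst r) * M$r"] by (simp add: mult.commute)
  then show ?thesis unfolding bl_def As_def
    by (simp add: sum_divide_distrib[symmetric] diff_divide_distrib algebra_simps sum_subtractf)
qed

lemma bl_scale: "bl f g (c *s M) = c * bl f g M"
  unfolding bl_def by (simp add: sum_distrib_left algebra_simps)

lemma pf_scale: "pf f1 f2 f3 f4 (c *s M) = c^2 * pf f1 f2 f3 f4 M"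
  unfolding pf_def bl_scale by (simp add: algebra_simps power2_eq_square)

lemma pf_rank2: "pf f1 f2 f3 f4 (As (tensor_vec x y)) = 0"
  unfolding pf_def bl_As bl_tv by (simp add: field_simps)

lemma key_lemma:
  assumes w: "asym w" "pf f1 f2 f3 f4 w \<noteq> 0"
    and h: "\<forall>z. asym z \<and> ip w z = 0 \<longrightarrow> ip (tensor_vec x y) z = 0"
  shows "ip (tensor_vec x y) w = 0"
proof (rule ccontr)
  assume ne: "ip (tensor_vec x y) w \<noteq> 0"
  have "w \<noteq> 0" using w(2) unfolding pf_def bl_def by auto
  then obtain c where c: "As (tensor_vec x y) = c *s w" using proj_lemma[OF w(1) _ h] by blast
  have "ip (tensor_vec x y) w = cnj c * ip w w" using ip_As[OF w(1)] c ip_left_scale by metis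
  then have "c \<noteq> 0" using ne by auto
  then have "w = (1/c) *s As (tensor_vec x y)" using c by (simp add: vector_smult_assoc)
  then have "pf f1 f2 f3 f4 w = 0" using pf_scale pf_rank2 by (metis mult_zero_right)
  then show False using w(2) by simp
qed



lemma kron_decomp:
  "kron (\<Sum>s\<in>UNIV. ketbra (c s)) (\<Sum>t\<in>UNIV. ketbra (d t)) =
   (\<Sum>s\<in>UNIV. \<Sum>t\<in>UNIV. ketbra (tensor_vec (c s) (d t)))"
  unfolding kron_def
  by (simp add: vec_eq_iff sum_component ketbra_def tensor_vec_def sum_product algebra_simps)

lemma kron_qf:
  fixes \<sigma> \<tau> :: "complex^'k^'k"
  assumes "psd \<sigma>" "psd \<tau>"
  shows "\<exists>(c::'k \<Rightarrow> complex^'k) (d::'k \<Rightarrow> complex^'k). \<forall>z. qf (kron \<sigma> \<tau>) z =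
     of_real (\<Sum>s\<in>UNIV. \<Sum>t\<in>UNIV. (cmod (ip (tensor_vec (c s) (d t)) z))^2)"
proof -
  obtain c :: "'k \<Rightarrow> complex^'k" where c: "\<sigma> = (\<Sum>s\<in>UNIV. ketbra (c s))" using gram[OF assms(1)] by blast
  obtain d :: "'k \<Rightarrow> complex^'k" where d: "\<tau> = (\<Sum>s\<in>UNIV. ketbra (d s))" using gram[OF assms(2)] by blast
  have "qf (kron \<sigma> \<tau>) z = of_real (\<Sum>s\<in>UNIV. \<Sum>t\<in>UNIV. (cmod (ip (tensor_vec (c s) (d t)) z))^2)" for z
    unfolding c d kron_decomp qf_sum qf_ketbra of_real_sum
    by (intro sum.cong refl) (metis complex_norm_square mult.commute)
  then show ?thesis by (intro exI[of _ c] exI[of _ d] allI)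
qed

lemma kron_psd_qf:
  fixes \<sigma> \<tau> :: "complex^'k::finite^'k"
  assumes "psd \<sigma>" "psd \<tau>"
  shows "Im (qf (kron \<sigma> \<tau>) z) = 0" "Re (qf (kron \<sigma> \<tau>) z) \<ge> 0"
proof -
  obtain c d :: "'k \<Rightarrow> complex^'k" where cd: "\<forall>z. qf (kron \<sigma> \<tau>) z =
     of_real (\<Sum>s\<in>UNIV. \<Sum>t\<in>UNIV. (cmod (ip (tensor_vec (c s) (d t)) z))^2)"
    using kron_qf[OF assms] by blast
  show "Im (qf (kron \<sigma> \<tau>) z) = 0" "Re (qf (kron \<sigma> \<tau>) z) \<ge> 0"
    using cd by (auto intro!: sum_nonneg)
qed

lemma kron_key:
  fixes \<sigma> \<tau> :: "complex^'k::finite^'k"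
  assumes "psd \<sigma>" "psd \<tau>" "asym w" "pf f1 f2 f3 f4 w \<noteq> 0"
    and K: "\<forall>z. asym z \<and> ip w z = 0 \<longrightarrow> qf (kron \<sigma> \<tau>) z = 0"
  shows "qf (kron \<sigma> \<tau>) w = 0"
proof -
  obtain c d :: "'k \<Rightarrow> complex^'k" where cd: "\<forall>z. qf (kron \<sigma> \<tau>) z =
     of_real (\<Sum>s\<in>UNIV. \<Sum>t\<in>UNIV. (cmod (ip (tensor_vec (c s) (d t)) z))^2)"
    using kron_qf[OF assms(1,2)] by blast
  have z0: "ip (tensor_vec (c s) (d t)) z = 0" if "asym z" "ip w z = 0" for s t z
  proof -
    have "(\<Sum>s\<in>UNIV. \<Sum>t\<in>UNIV. (cmod (ip (tensor_vec (c s) (d t)) z))^2) = 0"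
      using K that cd by (metis of_real_eq_0_iff)
    then have "\<forall>s\<in>UNIV. (\<Sum>t\<in>UNIV. (cmod (ip (tensor_vec (c s) (d t)) z))^2) = 0"
      by (subst sum_nonneg_eq_0_iff[symmetric]) (auto intro!: sum_nonneg)
    then have "\<forall>t\<in>UNIV. (cmod (ip (tensor_vec (c s) (d t)) z))^2 = 0"
      by (subst sum_nonneg_eq_0_iff[symmetric]) auto
    then show ?thesis by simp
  qed
  have "ip (tensor_vec (c s) (d t)) w = 0" for s t
    using key_lemma[OF assms(3,4)] z0 by blast
  then show ?thesis using cd by simp
qed

lemma not_separable:
  fixes \<rho> :: "('k::finite) bimat"
  assumes w: "asym w" "pf f1 f2 f3 f4 w \<noteq> 0"
    and K: "\<forall>z. asym z \<and> ip w z = 0 \<longrightarrow> qf \<rho> z = 0"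
    and nz: "qf \<rho> w \<noteq> 0"
  shows "\<not> separable \<rho>"
proof
  assume "separable \<rho>"
  then obtain m :: nat and p :: "nat \<Rightarrow> real" and \<sigma> \<tau> :: "nat \<Rightarrow> complex^'k^'k" where
    h: "\<forall>j<m. p j \<ge> 0 \<and> density (\<sigma> j) \<and> density (\<tau> j)"
    and rho: "\<rho> = (\<Sum>j<m. (\<chi> r s. complex_of_real (p j) * kron (\<sigma> j) (\<tau> j) $ r $ s))"
    unfolding separable_def by blast
  have psds: "psd (\<sigma> j)" "psd (\<tau> j)" if "j < m" for j using h[rule_format, OF that] unfolding density_def by blast+
  have qr: "qf \<rho> z = (\<Sum>j<m. of_real (p j) * qf (kron (\<sigma> j) (\<tau> j)) z)" for z
    unfolding rho qf_sum qf_scale ..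
  have each: "qf (kron (\<sigma> j) (\<tau> j)) z = 0" if j: "j < m" "p j > 0" and z: "asym z" "ip w z = 0" for j z
  proof -
    have "Re (qf \<rho> z) = 0" using K z by simp
    then have "(\<Sum>j<m. p j * Re (qf (kron (\<sigma> j) (\<tau> j)) z)) = 0" unfolding qr by simp
    then have "\<forall>j\<in>{..<m}. p j * Re (qf (kron (\<sigma> j) (\<tau> j)) z) = 0"
      by (subst sum_nonneg_eq_0_iff[symmetric]) (auto intro!: mult_nonneg_nonneg h[rule_format, THEN conjunct1] kron_psd_qf psds)
    then have "p j * Re (qf (kron (\<sigma> j) (\<tau> j)) z) = 0" using j by blast
    then have "Re (qf (kron (\<sigma> j) (\<tau> j)) z) = 0" using j by simp
    moreover have "Im (qf (kron (\<sigma> j) (\<tau> j)) z) = 0" using kron_psd_qf psds j by blast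
    ultimately show ?thesis by (simp add: complex_eq_iff)
  qed
  have "of_real (p j) * qf (kron (\<sigma> j) (\<tau> j)) w = 0" if "j < m" for j
  proof (cases "p j > 0")
    case True
    then show ?thesis using kron_key[OF psds[OF that] w] each[OF that True] by simp
  next
    case False
    then show ?thesis using h that by force
  qed
  then have "qf \<rho> w = 0" unfolding qr by (intro sum.neutral) simp
  then show False using nz by simp
qed

lemma dual_exists:
  fixes B :: "(complex^'k) set"
  assumes "vec.independent B" "x \<in> B"
  shows "\<exists>f. \<forall>y\<in>B. dot f y = (if y = x then 1 else 0)"
proof -
  interpret vp: vector_space_pair "(*s) :: complex \<Rightarrow> complex^'k \<Rightarrow> complex^'k" "(*) :: complex \<Rightarrow> complex \<Rightarrow> complex"
    by unfold_locales
  obtain g :: "complex^'k \<Rightarrow> complex" where g: "Vector_Spaces.linear ((*s) :: complex \<Rightarrow> complex^'k \<Rightarrow> complex^'k) ((*) :: complex \<Rightarrow> complex \<Rightarrow> complex) g"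
    "\<forall>y\<in>B. g y = (if y = x then 1 else 0)"
    using vp.linear_independent_extend[OF assms(1), of "\<lambda>y. if y = x then 1 else 0"] by blast
  have rep: "g y = (\<Sum>p\<in>UNIV. g (axis p 1) * (y::complex^'k)$p)" for y
  proof -
    have "g y = g (\<Sum>p\<in>UNIV. y$p *s axis p 1)" by (simp add: basis_expansion)
    also have "\<dots> = (\<Sum>p\<in>UNIV. g (y$p *s axis p 1))" using module_hom.sum[OF g(1)[unfolded linear_iff_module_hom]] by blast
    also have "\<dots> = (\<Sum>p\<in>UNIV. g (axis p 1) * y$p)"
      by (simp add: module_hom.scale[OF g(1)[unfolded linear_iff_module_hom]] mult.commute)
    finally show ?thesis .
  qed
  show ?thesis
    by (rule exI[of _ "\<chi> p. g (axis p 1)"]) (simp add: dot_def rep[symmetric] g(2))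
qed

lemma bl_sum: "bl f g (\<Sum>i\<in>I. M i) = (\<Sum>i\<in>I. bl f g (M i))"
  unfolding bl_def by (simp add: sum_component sum_distrib_left sum.swap[of _ I])

lemma pf_w:
  fixes a b :: "nat \<Rightarrow> complex^'k"
  assumes n: "n \<ge> 2" and ind: "vec.independent (a ` {..<n} \<union> b ` {..<n})"
    and ia: "inj_on a {..<n}" and ib: "inj_on b {..<n}"
    and dj: "a ` {..<n} \<inter> b ` {..<n} = {}"
  shows "\<exists>f1 f2 f3 f4. pf f1 f2 f3 f4 (As (\<Sum>i<n. tensor_vec (a i) (b i))) = 1/4"
proof -
  let ?B = "a ` {..<n} \<union> b ` {..<n}"
  have n01: "0 < n" "1 < n" using n by auto
  obtain f1 where f1: "\<forall>y\<in>?B. dot f1 y = (if y = a 0 then 1 else 0)" using dual_exists[OF ind, of "a 0"] n01 by blast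
  obtain f2 where f2: "\<forall>y\<in>?B. dot f2 y = (if y = b 0 then 1 else 0)" using dual_exists[OF ind, of "b 0"] n01 by blast
  obtain f3 where f3: "\<forall>y\<in>?B. dot f3 y = (if y = a 1 then 1 else 0)" using dual_exists[OF ind, of "a 1"] n01 by blast
  obtain f4 where f4: "\<forall>y\<in>?B. dot f4 y = (if y = b 1 then 1 else 0)" using dual_exists[OF ind, of "b 1"] n01 by blast
  have aa: "a i = a j \<longleftrightarrow> i = j" if "i < n" "j < n" for i j using ia that by (auto dest: inj_onD)
  have bb: "b i = b j \<longleftrightarrow> i = j" if "i < n" "j < n" for i j using ib that by (auto dest: inj_onD)
  have ab: "a i \<noteq> b j" if "i < n" "j < n" for i j using dj that by blast
  have inB: "a i \<in> ?B" "b i \<in> ?B" if "i < n" for i using that by auto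
  have d1: "dot f1 (a i) = (if i = 0 then 1 else 0)" "dot f1 (b i) = 0"
       "dot f2 (a i) = 0" "dot f2 (b i) = (if i = 0 then 1 else 0)"
       "dot f3 (a i) = (if i = 1 then 1 else 0)" "dot f3 (b i) = 0"
       "dot f4 (a i) = 0" "dot f4 (b i) = (if i = 1 then 1 else 0)" if i: "i < n" for i
  proof -
    note x = inB[OF i]
    have e1: "a i = a 0 \<longleftrightarrow> i = 0" "a i = a 1 \<longleftrightarrow> i = 1" using aa[OF i] n01 by auto
    have e2: "b i = b 0 \<longleftrightarrow> i = 0" "b i = b 1 \<longleftrightarrow> i = 1" using bb[OF i] n01 by auto
    have e3: "b i \<noteq> a 0" "b i \<noteq> a 1" "a i \<noteq> b 0" "a i \<noteq> b 1"
      using ab[of 0 i] ab[of 1 i] ab[of i 0] ab[of i 1] i n01 by auto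
    show "dot f1 (a i) = (if i = 0 then 1 else 0)" using f1 x e1 by simp
    show "dot f1 (b i) = 0" using f1 x e3 by simp
    show "dot f2 (a i) = 0" using f2 x e3 by simp
    show "dot f2 (b i) = (if i = 0 then 1 else 0)" using f2 x e2 by simp
    show "dot f3 (a i) = (if i = 1 then 1 else 0)" using f3 x e1 by simp
    show "dot f3 (b i) = 0" using f3 x e3 by simp
    show "dot f4 (a i) = 0" using f4 x e3 by simp
    show "dot f4 (b i) = (if i = 1 then 1 else 0)" using f4 x e2 by simp
  qed
  define v where "v = (\<Sum>i<n. tensor_vec (a i) (b i))"
  have blv: "bl f g v = (\<Sum>i<n. dot f (a i) * dot g (b i))" for f g
    unfolding v_def bl_sum bl_tv ..
  have s: "(\<Sum>i<n. (if i = k then 1 else 0) * (if i = l then 1 else 0)) = (if k = l \<and> k < n then 1 else (0::complex))" for k l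
    by (cases "k = l") (auto simp: mult_if0 sum.delta)
  have gen: "bl f g v = (\<Sum>i<n. A i * B i)" if "\<And>i. i < n \<Longrightarrow> dot f (a i) = A i \<and> dot g (b i) = B i" for f g A B
    unfolding blv using that by (intro sum.cong) auto
  have z1: "(\<Sum>i<n. (0::complex) * B i) = 0" "(\<Sum>i<n. A i * (0::complex)) = 0" for A B by simp_all
  have bls: "bl f1 f2 v = 1" "bl f2 f1 v = 0" "bl f3 f4 v = 1" "bl f4 f3 v = 0"
    "bl f1 f3 v = 0" "bl f3 f1 v = 0" "bl f2 f4 v = 0" "bl f4 f2 v = 0"
    "bl f1 f4 v = 0" "bl f4 f1 v = 0" "bl f2 f3 v = 0" "bl f3 f2 v = 0"
    using gen[where f=f1 and g=f2 and A="\<lambda>i. if i = 0 then 1 else 0" and B="\<lambda>i. if i = 0 then 1 else 0"]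
      gen[where f=f2 and g=f1 and A="\<lambda>i. 0" and B="\<lambda>i. 0"]
      gen[where f=f3 and g=f4 and A="\<lambda>i. if i = 1 then 1 else 0" and B="\<lambda>i. if i = 1 then 1 else 0"]
      gen[where f=f4 and g=f3 and A="\<lambda>i. 0" and B="\<lambda>i. 0"]
      gen[where f=f1 and g=f3 and A="\<lambda>i. if i = 0 then 1 else 0" and B="\<lambda>i. 0"]
      gen[where f=f3 and g=f1 and A="\<lambda>i. if i = 1 then 1 else 0" and B="\<lambda>i. 0"]
      gen[where f=f2 and g=f4 and A="\<lambda>i. 0" and B="\<lambda>i. if i = 1 then 1 else 0"]
      gen[where f=f4 and g=f2 and A="\<lambda>i. 0" and B="\<lambda>i. if i = 0 then 1 else 0"]
      gen[where f=f1 and g=f4 and A="\<lambda>i. if i = 0 then 1 else 0" and B="\<lambda>i. if i = 1 then 1 else 0"]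
      gen[where f=f4 and g=f1 and A="\<lambda>i. 0" and B="\<lambda>i. 0"]
      gen[where f=f2 and g=f3 and A="\<lambda>i. 0" and B="\<lambda>i. 0"]
      gen[where f=f3 and g=f2 and A="\<lambda>i. if i = 1 then 1 else 0" and B="\<lambda>i. if i = 0 then 1 else 0"]
    using n01 by (simp_all add: d1 s)
  have "pf f1 f2 f3 f4 (As v) = 1/4" unfolding pf_def bl_As bls by simp
  then show ?thesis unfolding v_def by blast
qed



definition nrm :: "complex^'n \<Rightarrow> real" where
  "nrm x = (\<Sum>r\<in>UNIV. (cmod (x$r))^2)"

lemma nrm_nonneg: "nrm x \<ge> 0" unfolding nrm_def by (auto intro: sum_nonneg)

lemma nrm_zero: assumes "nrm x = 0" shows "x = 0"
proof -
  have "\<forall>r\<in>UNIV. (cmod (x$r))^2 = 0" using assms unfolding nrm_def by (subst sum_nonneg_eq_0_iff[symmetric]) auto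
  then show ?thesis by (simp add: vec_eq_iff)
qed

lemma comp_le_nrm: "(cmod (x$i))^2 \<le> nrm x"
  unfolding nrm_def by (rule member_le_sum) auto

lemma prod_le_nrm: "cmod (x$i) * cmod (x$j) \<le> nrm x"
proof -
  have "2 * cmod (x$i) * cmod (x$j) \<le> (cmod (x$i))^2 + (cmod (x$j))^2" by (rule sum_squares_bound)
  then show ?thesis using comp_le_nrm[of x i] comp_le_nrm[of x j] by linarith
qed

lemma qf_bound: "cmod (qf M x) \<le> (\<Sum>i\<in>UNIV. \<Sum>j\<in>UNIV. cmod (M$i$j)) * nrm x"
proof -
  have "cmod (qf M x) \<le> (\<Sum>i\<in>UNIV. cmod (\<Sum>j\<in>UNIV. cnj (x$i) * M$i$j * x$j))"
    unfolding qf_expand by (rule norm_sum)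
  also have "\<dots> \<le> (\<Sum>i\<in>UNIV. \<Sum>j\<in>UNIV. cmod (cnj (x$i) * M$i$j * x$j))"
    by (intro sum_mono norm_sum)
  also have "\<dots> \<le> (\<Sum>i\<in>UNIV. \<Sum>j\<in>UNIV. cmod (M$i$j) * nrm x)"
  proof (intro sum_mono)
    fix i j
    have "cmod (cnj (x$i) * M$i$j * x$j) = cmod (M$i$j) * (cmod (x$i) * cmod (x$j))"
      by (simp add: norm_mult)
    also have "\<dots> \<le> cmod (M$i$j) * nrm x" by (intro mult_left_mono prod_le_nrm) auto
    finally show "cmod (cnj (x$i) * M$i$j * x$j) \<le> cmod (M$i$j) * nrm x" .
  qed
  also have "\<dots> = (\<Sum>i\<in>UNIV. \<Sum>j\<in>UNIV. cmod (M$i$j)) * nrm x" by (simp add: sum_distrib_right)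
  finally show ?thesis .
qed

lemma mv_bound: "nrm (M *v x) \<le> (\<Sum>r\<in>UNIV. (\<Sum>s\<in>UNIV. cmod (M$r$s))^2) * nrm x"
proof -
  have "(cmod ((M *v x)$r))^2 \<le> (\<Sum>s\<in>UNIV. cmod (M$r$s))^2 * nrm x" for r
  proof -
    have "cmod ((M *v x)$r) \<le> (\<Sum>s\<in>UNIV. cmod (M$r$s) * cmod (x$s))"
      unfolding matrix_vector_mult_def using norm_sum[of "\<lambda>s. M$r$s * x$s" UNIV] by (simp add: norm_mult)
    then have "(cmod ((M *v x)$r))^2 \<le> (\<Sum>s\<in>UNIV. cmod (M$r$s) * cmod (x$s))^2"
      by (intro power_mono) auto
    also have "\<dots> = (\<Sum>s\<in>UNIV. \<Sum>t\<in>UNIV. (cmod (M$r$s) * cmod (M$r$t)) * (cmod (x$s) * cmod (x$t)))"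
      by (simp add: power2_eq_square sum_product algebra_simps)
    also have "\<dots> \<le> (\<Sum>s\<in>UNIV. \<Sum>t\<in>UNIV. (cmod (M$r$s) * cmod (M$r$t)) * nrm x)"
      by (intro sum_mono mult_left_mono prod_le_nrm) auto
    also have "\<dots> = (\<Sum>s\<in>UNIV. cmod (M$r$s))^2 * nrm x"
    proof -
      have "(\<Sum>s\<in>UNIV. cmod (M$r$s))^2 = (\<Sum>s\<in>UNIV. \<Sum>t\<in>UNIV. cmod (M$r$s) * cmod (M$r$t))"
        by (simp add: power2_eq_square sum_product)
      then show ?thesis by (simp add: sum_distrib_right)
    qed
    finally show ?thesis .
  qed
  then have "nrm (M *v x) \<le> (\<Sum>r\<in>UNIV. (\<Sum>s\<in>UNIV. cmod (M$r$s))^2 * nrm x)"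
    unfolding nrm_def[of "M *v x"] by (intro sum_mono) auto
  then show ?thesis by (simp add: sum_distrib_right)
qed

lemma qf_herm_real:
  assumes "\<forall>r s. cnj (M$r$s) = M$s$r"
  shows "Im (qf M x) = 0"
proof -
  have "cnj (qf M x) = (\<Sum>i\<in>UNIV. \<Sum>j\<in>UNIV. x$i * cnj (M$i$j) * cnj (x$j))"
    unfolding qf_expand by simp
  also have "\<dots> = (\<Sum>i\<in>UNIV. \<Sum>j\<in>UNIV. cnj (x$j) * M$j$i * x$i)"
    using assms by (simp add: algebra_simps)
  also have "\<dots> = qf M x" unfolding qf_expand by (rule sum.swap)
  finally have "Im (cnj (qf M x)) = Im (qf M x)" by simp
  then show ?thesis by simp
qed

lemma swap_mv: "(swap_op *v z)$r = z$(snd r, fst r)"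
proof -
  have "(swap_op *v z)$r = (\<Sum>s\<in>UNIV. (if fst r = snd s \<and> snd r = fst s then 1 else 0) * z$s)"
    by (simp add: matrix_vector_mult_def swap_op_def)
  also have "\<dots> = (\<Sum>s\<in>UNIV. if s = (snd r, fst r) then z$s else 0)"
    by (intro sum.cong) (auto simp: prod_eq_iff)
  also have "\<dots> = z$(snd r, fst r)" by simp
  finally show ?thesis .
qed

lemma qf_I_swap: "qf (mat 1) x + qf swap_op x = of_real ((\<Sum>r\<in>UNIV. (cmod (x$r + x$(snd r, fst r)))^2) / 2)"
proof -
  have e: "qf (mat 1) x + qf swap_op x = (\<Sum>r\<in>UNIV. cnj (x$r) * (x$r + x$(snd r, fst r)))"
    unfolding qf_mat1 qf_def swap_mv by (simp add: sum.distrib distrib_left)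
  have e2: "(\<Sum>r\<in>UNIV. cnj (x$r) * (x$r + x$(snd r, fst r))) = (\<Sum>r\<in>UNIV. cnj (x$(snd r, fst r)) * (x$(snd r, fst r) + x$r))"
    using sum_swap_idx[of "\<lambda>r. cnj (x$r) * (x$r + x$(snd r, fst r))"] by simp
  have e3: "(\<Sum>r\<in>UNIV. cnj (x$r) * (x$r + x$(snd r, fst r))) + (\<Sum>r\<in>UNIV. cnj (x$(snd r, fst r)) * (x$(snd r, fst r) + x$r))
     = (\<Sum>r\<in>UNIV. cnj (x$r + x$(snd r, fst r)) * (x$r + x$(snd r, fst r)))"
    unfolding sum.distrib[symmetric] by (intro sum.cong refl) (simp add: algebra_simps)
  have "2 * (qf (mat 1) x + qf swap_op x) = (\<Sum>r\<in>UNIV. cnj (x$r + x$(snd r, fst r)) * (x$r + x$(snd r, fst r)))"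
    unfolding mult_2 using e e2 e3 by simp
  also have "\<dots> = of_real (\<Sum>r\<in>UNIV. (cmod (x$r + x$(snd r, fst r)))^2)"
    unfolding of_real_sum by (intro sum.cong refl) (metis complex_norm_square mult.commute)
  finally show ?thesis by (simp add: field_simps)
qed

lemma cmod_add_sq: "(cmod (a + b))^2 = (cmod a)^2 + 2 * Re (cnj a * b) + (cmod b)^2"
  unfolding cmod_power2 by (simp add: power2_eq_square algebra_simps)



definition Gm :: "complex^('k::finite \<times> 'k) \<Rightarrow> real \<Rightarrow> 'k bimat" where
  "Gm v \<epsilon> = mat 1 + swap_op + (\<chi> r s. complex_of_real \<epsilon> * ketbra v $ r $ s)"

definition Om :: "complex^('k::finite \<times> 'k)" where
  "Om = (\<chi> r. if fst r = snd r then 1 else 0)"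

lemma qf_mat1': "qf (mat 1) x = of_real (nrm x)"
  unfolding qf_mat1 nrm_def of_real_sum by (intro sum.cong refl) (metis complex_norm_square mult.commute)

lemma cnj_mult_self: "cnj z * z = of_real ((cmod z)^2)"
  by (metis complex_norm_square mult.commute)

lemma qf_G: "qf (Gm v \<epsilon>) x = qf (mat 1) x + qf swap_op x + of_real (\<epsilon> * (cmod (ip v x))^2)"
  unfolding Gm_def qf_add qf_scale qf_ketbra cnj_mult_self by simp

lemma qf_I_swap_nonneg: "Im (qf (mat 1) x + qf swap_op x) = 0" "Re (qf (mat 1) x + qf swap_op x) \<ge> 0"
  unfolding qf_I_swap by (auto intro!: sum_nonneg)

lemma qf_I_swap_asym: assumes "asym z" shows "qf (mat 1) z + qf swap_op z = 0"
proof -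
  have "z$(snd r, fst r) = - z$r" for r using assms unfolding asym_def by (metis prod.collapse)
  then show ?thesis unfolding qf_I_swap by simp
qed

lemma trace_G:
  assumes "\<epsilon> \<ge> 0"
  shows "\<exists>T>0. mtrace (Gm v \<epsilon>) = of_real T"
proof -
  define T where "T = (\<Sum>r\<in>UNIV. 1 + (if fst r = snd r then 1 else 0) + \<epsilon> * (cmod (v$r))^2)"
  have "mtrace (Gm v \<epsilon>) = (\<Sum>r\<in>UNIV. of_real (1 + (if fst r = snd r then 1 else 0) + \<epsilon> * (cmod (v$r))^2))"
    unfolding mtrace_def Gm_def
  proof (intro sum.cong refl)
    fix r :: "'a \<times> 'a"
    have vv: "v$r * cnj (v$r) = of_real ((cmod (v$r))^2)" by (metis complex_norm_square)
    show "(mat 1 + swap_op + (\<chi> r s. complex_of_real \<epsilon> * ketbra v $ r $ s)) $ r $ r =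
      of_real (1 + (if fst r = snd r then 1 else 0) + \<epsilon> * (cmod (v$r))^2)"
    proof -
      have e1: "(mat 1 + swap_op + (\<chi> r s. complex_of_real \<epsilon> * ketbra v $ r $ s)) $ r $ r =
        1 + (if fst r = snd r then 1 else 0) + of_real \<epsilon> * (v$r * cnj (v$r))"
        by (simp add: swap_op_def ketbra_def mat_def)
      show ?thesis unfolding e1 vv by simp
    qed
  qed
  then have "mtrace (Gm v \<epsilon>) = of_real T" unfolding T_def of_real_sum .
  moreover have "T > 0" unfolding T_def using assms
    by (intro sum_pos) (auto intro!: add_pos_nonneg)
  ultimately show ?thesis by blast
qed

lemma qf_normalize: "qf (normalize_op M) x = qf M x / mtrace M"
  unfolding normalize_op_def qf_div ..

lemma trace_normalize: "mtrace M \<noteq> 0 \<Longrightarrow> mtrace (normalize_op M) = 1"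
  unfolding mtrace_def normalize_op_def by (simp add: sum_divide_distrib[symmetric])

lemma psd_div:
  assumes "Im q = 0" "Re q \<ge> 0" "T > 0"
  shows "Im (q / of_real T) = 0" "Re (q / of_real T) \<ge> 0"
  using assms by (simp_all add: Im_divide_of_real Re_divide_of_real)

lemma psd_G: assumes "\<epsilon> \<ge> 0" shows "Im (qf (Gm v \<epsilon>) x) = 0" "Re (qf (Gm v \<epsilon>) x) \<ge> 0"
  unfolding qf_G using qf_I_swap_nonneg[of x] assms by auto

lemma density_normalize_G:
  assumes "\<epsilon> \<ge> 0" shows "density (normalize_op (Gm v \<epsilon>))"
proof -
  obtain T where T: "T > 0" "mtrace (Gm v \<epsilon>) = of_real T" using trace_G[OF assms] by blast
  have "psd (normalize_op (Gm v \<epsilon>))"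
    unfolding psd_qf qf_normalize T(2) using psd_div[OF psd_G(1)[OF assms] psd_G(2)[OF assms] T(1)] by blast
  then show ?thesis unfolding density_def using trace_normalize[of "Gm v \<epsilon>"] T by simp
qed

lemma entangled_G:
  assumes "\<epsilon> > 0" and w: "asym (As v)" "pf f1 f2 f3 f4 (As v) \<noteq> 0"
  shows "entangled (normalize_op (Gm v \<epsilon>))"
proof -
  obtain T where T: "T > 0" "mtrace (Gm v \<epsilon>) = of_real T" using trace_G assms(1) by (meson less_imp_le)
  have wn: "As v \<noteq> 0" using w(2) unfolding pf_def bl_def by auto
  have K: "\<forall>z. asym z \<and> ip (As v) z = 0 \<longrightarrow> qf (normalize_op (Gm v \<epsilon>)) z = 0"
  proof (intro allI impI)
    fix z assume z: "asym z \<and> ip (As v) z = 0"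
    then have az: "asym z" and "ip v z = 0" using ip_As by metis+
    then show "qf (normalize_op (Gm v \<epsilon>)) z = 0"
      unfolding qf_normalize qf_G using qf_I_swap_asym[OF az] by simp
  qed
  have "ip v (As v) = ip (As v) (As v)" using ip_As[OF w(1)] .
  moreover have "ip (As v) (As v) \<noteq> 0" using ip_self_zero wn by blast
  ultimately have "ip v (As v) \<noteq> 0" by simp
  then have "qf (Gm v \<epsilon>) (As v) \<noteq> 0"
    unfolding qf_G using qf_I_swap_asym[OF w(1)] assms(1) by simp
  then have nz: "qf (normalize_op (Gm v \<epsilon>)) (As v) \<noteq> 0"
    unfolding qf_normalize T(2) using T(1) by simp
  show ?thesis unfolding entangled_def
    using density_normalize_G[of \<epsilon> v] assms(1) not_separable[OF w K nz] by simp
qed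

definition Hm :: "complex^('k::finite \<times> 'k) \<Rightarrow> 'k bimat" where
  "Hm v = ptrans (ketbra v)"

lemma ptrans_G: "ptrans (Gm v \<epsilon>) = mat 1 + ketbra Om + (\<chi> r s. complex_of_real \<epsilon> * Hm v $ r $ s)"
  unfolding Gm_def Hm_def
  by (simp add: vec_eq_iff ptrans_def mat_def swap_op_def ketbra_def Om_def prod_eq_iff)

lemma Hm_herm: "\<forall>r s. cnj (Hm v $ r $ s) = Hm v $ s $ r"
  unfolding Hm_def by (simp add: ptrans_def ketbra_def mult.commute)

lemma qf_ptrans_normalize: "qf (ptrans (normalize_op M)) x = qf (ptrans M) x / mtrace M"
proof -
  have "ptrans (normalize_op M) = (\<chi> r s. ptrans M $ r $ s / mtrace M)"
    by (simp add: vec_eq_iff ptrans_def normalize_op_def)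
  then show ?thesis by (simp add: qf_div)
qed

lemma ppt_G:
  assumes "\<epsilon> \<ge> 0" "\<epsilon> * (\<Sum>i\<in>UNIV. \<Sum>j\<in>UNIV. cmod (Hm v $ i $ j)) \<le> 1"
  shows "psd (ptrans (normalize_op (Gm v \<epsilon>)))"
proof -
  obtain T where T: "T > 0" "mtrace (Gm v \<epsilon>) = of_real T" using trace_G[OF assms(1)] by blast
  define S where "S = (\<Sum>i\<in>UNIV. \<Sum>j\<in>UNIV. cmod (Hm v $ i $ j))"
  have q: "qf (ptrans (Gm v \<epsilon>)) x = of_real (nrm x) + of_real ((cmod (ip Om x))^2) + of_real \<epsilon> * qf (Hm v) x" for x
    unfolding ptrans_G qf_add qf_scale qf_mat1' qf_ketbra cnj_mult_self ..
  have im: "Im (qf (ptrans (Gm v \<epsilon>)) x) = 0" for x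
    unfolding q using qf_herm_real[OF Hm_herm, of v x] by simp
  have re: "Re (qf (ptrans (Gm v \<epsilon>)) x) \<ge> 0" for x
  proof -
    have b: "- Re (qf (Hm v) x) \<le> S * nrm x"
      using qf_bound[of "Hm v" x] abs_Re_le_cmod[of "qf (Hm v) x"] unfolding S_def by linarith
    have "\<epsilon> * (- Re (qf (Hm v) x)) \<le> \<epsilon> * (S * nrm x)" using b assms(1) by (rule mult_left_mono)
    also have "\<dots> \<le> nrm x" using assms(2) nrm_nonneg[of x] unfolding S_def[symmetric]
      by (metis mult.assoc mult_left_le_one_le mult_nonneg_nonneg assms(1) order_refl mult_right_mono mult_1)
    finally have "\<epsilon> * (- Re (qf (Hm v) x)) \<le> nrm x" .
    moreover have "Re (qf (ptrans (Gm v \<epsilon>)) x) = nrm x + (cmod (ip Om x))^2 + \<epsilon> * Re (qf (Hm v) x)"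
      unfolding q by simp
    ultimately show ?thesis using zero_le_power2[of "cmod (ip Om x)"] by linarith
  qed
  show ?thesis unfolding psd_qf qf_ptrans_normalize T(2)
    using psd_div[OF im re T(1)] by blast
qed

definition Em :: "complex^('k::finite \<times> 'k) \<Rightarrow> 'k bimat" where
  "Em v = realign (ketbra v)"

lemma realign_G: "realign (Gm v \<epsilon>) = ketbra Om + swap_op + (\<chi> r s. complex_of_real \<epsilon> * Em v $ r $ s)"
  unfolding Gm_def Em_def
  by (simp add: vec_eq_iff realign_def mat_def swap_op_def ketbra_def Om_def prod_eq_iff conj_commute)

lemma scale_mv: "(\<chi> r s. c * E $ r $ s) *v u = c *s (E *v u)"
  by (simp add: vec_eq_iff matrix_vector_mult_def sum_distrib_left mult.assoc)

lemma nrm_scale: "nrm (c *s x) = (cmod c)^2 * nrm x"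
  unfolding nrm_def by (simp add: norm_mult power_mult_distrib sum_distrib_left)

lemma nrm_y_ge:
  fixes u :: "complex^('k::finite \<times> 'k)"
  shows "nrm (ketbra Om *v u + swap_op *v u) \<ge> nrm u"
proof -
  define c where "c = ip Om u"
  have om_sw: "Om $ (snd r, fst r) = Om $ r" for r :: "'k \<times> 'k" by (auto simp: Om_def)
  have om_r: "cnj (Om $ r) = Om $ r" for r :: "'k \<times> 'k" by (auto simp: Om_def)
  have y: "(ketbra Om *v u + swap_op *v u) $ r = u $ (snd r, fst r) + Om $ r * c" for r
    unfolding c_def ip_def vector_add_component swap_mv by (simp add: matrix_vector_mult_def ketbra_def sum_distrib_left mult.assoc)
  have "nrm (ketbra Om *v u + swap_op *v u) =
     (\<Sum>r\<in>UNIV. (cmod (u $ (snd r, fst r)))^2 + 2 * Re (cnj (u $ (snd r, fst r)) * (Om $ r * c)) + (cmod (Om $ r * c))^2)"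
    unfolding nrm_def y cmod_add_sq ..
  also have "\<dots> = nrm u + 2 * Re (\<Sum>r\<in>UNIV. cnj (u $ (snd r, fst r)) * (Om $ r * c)) + (\<Sum>r::'k\<times>'k\<in>UNIV. (cmod (Om $ r * c))^2)"
    unfolding nrm_def sum.distrib Re_sum sum_distrib_left[symmetric]
    using sum_swap_idx[of "\<lambda>r. (cmod (u $ r))^2"] by simp
  also have "(\<Sum>r\<in>UNIV. cnj (u $ (snd r, fst r)) * (Om $ r * c)) = cnj c * c"
  proof -
    have "(\<Sum>r\<in>UNIV. cnj (u $ (snd r, fst r)) * (Om $ r * c)) = (\<Sum>r\<in>UNIV. cnj (u $ r) * (Om $ r * c))"
      using sum_swap_idx[of "\<lambda>r. cnj (u $ r) * (Om $ r * c)"] om_sw by simp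
    also have "\<dots> = (\<Sum>r\<in>UNIV. cnj (Om $ r * u $ r)) * c"
      by (simp add: sum_distrib_right sum_distrib_left om_r mult_ac)
    also have "\<dots> = cnj c * c" unfolding c_def ip_def om_r by simp
    finally show ?thesis .
  qed
  finally have e: "nrm (ketbra Om *v u + swap_op *v u) = nrm u + 2 * (cmod c)^2 + (\<Sum>r::'k\<times>'k\<in>UNIV. (cmod (Om $ r * c))^2)"
    by (simp add: cnj_mult_self)
  have "0 \<le> 2 * (cmod c)^2 + (\<Sum>r::'k\<times>'k\<in>UNIV. (cmod (Om $ r * c))^2)" by (intro add_nonneg_nonneg sum_nonneg) auto
  then show ?thesis unfolding e by linarith
qed

lemma invertible_G:
  assumes "\<epsilon> \<ge> 0" "\<epsilon>^2 * (\<Sum>r\<in>UNIV. (\<Sum>s\<in>UNIV. cmod (Em v $ r $ s))^2) < 1"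
  shows "invertible (realign (Gm v \<epsilon>))"
proof -
  define C where "C = (\<Sum>r\<in>UNIV. (\<Sum>s\<in>UNIV. cmod (Em v $ r $ s))^2)"
  have "u = 0" if h: "realign (Gm v \<epsilon>) *v u = 0" for u
  proof -
    have y0: "ketbra Om *v u + swap_op *v u = - (of_real \<epsilon> *s (Em v *v u))"
      using h unfolding realign_G matrix_vector_mult_add_rdistrib scale_mv
      by (simp add: add_eq_0_iff2 add.assoc eq_neg_iff_add_eq_0)
    have y1: "ketbra Om *v u + swap_op *v u = (- of_real \<epsilon>) *s (Em v *v u)"
      using y0 by (simp add: vec_eq_iff)
    have "nrm (ketbra Om *v u + swap_op *v u) = \<epsilon>^2 * nrm (Em v *v u)"
      unfolding y1 nrm_scale by simp
    also have "\<dots> \<le> \<epsilon>^2 * (C * nrm u)" unfolding C_def by (intro mult_left_mono mv_bound) auto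
    finally have "nrm u \<le> (\<epsilon>^2 * C) * nrm u" using nrm_y_ge[of u] by (simp add: mult.assoc)
    then have "(1 - \<epsilon>^2 * C) * nrm u \<le> 0" by (simp add: algebra_simps)
    moreover have "1 - \<epsilon>^2 * C > 0" using assms(2) unfolding C_def by simp
    ultimately have "nrm u \<le> 0" by (simp add: mult_le_0_iff)
    then have "nrm u = 0" using nrm_nonneg[of u] by linarith
    then show "u = 0" by (rule nrm_zero)
  qed
  then show ?thesis
    using invertible_left_inverse matrix_left_invertible_ker by blast
qed



theorem mainTheorem1:
  fixes a b :: "nat \<Rightarrow> complex ^ 'k" and n :: nat
  assumes "CARD('k) \<ge> 4" and "n \<ge> 2"
    and "vec.independent (a ` {..<n} \<union> b ` {..<n})"
    and "card (a ` {..<n} \<union> b ` {..<n}) = 2 * n"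
  shows "\<exists>\<epsilon>0 > 0. \<forall>\<epsilon>. 0 < \<epsilon> \<and> \<epsilon> < \<epsilon>0 \<longrightarrow>
           entangled (normalize_op (gamma n a b \<epsilon>)) \<and>
           psd (ptrans (normalize_op (gamma n a b \<epsilon>))) \<and>
           invertible (realign (gamma n a b \<epsilon>))"
proof -
  define v where "v = (\<Sum>i<n. tensor_vec (a i) (b i))"
  have geq: "gamma n a b \<epsilon> = Gm v \<epsilon>" for \<epsilon>
    unfolding gamma_def Gm_def Let_def v_def ..
  define A where "A = a ` {..<n}"
  define B where "B = b ` {..<n}"
  have fA: "finite A" "finite B" unfolding A_def B_def by auto
  have cA: "card A \<le> n" "card B \<le> n" unfolding A_def B_def using card_image_le[of "{..<n}"] by auto
  have cU: "card (A \<union> B) \<le> card A + card B" by (rule card_Un_le)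
  have c2: "card (A \<union> B) = 2 * n" using assms(4) unfolding A_def B_def .
  have cAn: "card A = n" "card B = n" using cA cU c2 by linarith+
  have ia: "inj_on a {..<n}" using cAn(1) unfolding A_def by (intro eq_card_imp_inj_on) auto
  have ib: "inj_on b {..<n}" using cAn(2) unfolding B_def by (intro eq_card_imp_inj_on) auto
  have "card A + card B = card (A \<union> B) + card (A \<inter> B)" using card_Un_Int[OF fA] .
  then have "card (A \<inter> B) = 0" using cAn c2 by linarith
  then have dj: "A \<inter> B = {}" using fA by simp
  obtain f1 f2 f3 f4 where pf: "pf f1 f2 f3 f4 (As v) = 1/4"
    using pf_w[OF assms(2,3) ia ib dj[unfolded A_def B_def]] unfolding v_def by blast
  then have pfn: "pf f1 f2 f3 f4 (As v) \<noteq> 0" by (metis divide_eq_0_iff one_neq_zero zero_neq_numeral)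
  define SH where "SH = (\<Sum>i\<in>UNIV. \<Sum>j\<in>UNIV. cmod (Hm v $ i $ j))"
  define CE where "CE = (\<Sum>r\<in>UNIV. (\<Sum>s\<in>UNIV. cmod (Em v $ r $ s))^2)"
  have SH0: "SH \<ge> 0" unfolding SH_def by (auto intro!: sum_nonneg)
  have CE0: "CE \<ge> 0" unfolding CE_def by (auto intro!: sum_nonneg)
  define e0 where "e0 = 1 / (1 + SH + CE)"
  have e0pos: "e0 > 0" unfolding e0_def using SH0 CE0 by simp
  have main: "entangled (normalize_op (gamma n a b \<epsilon>)) \<and>
           psd (ptrans (normalize_op (gamma n a b \<epsilon>))) \<and>
           invertible (realign (gamma n a b \<epsilon>))" if e: "0 < \<epsilon>" "\<epsilon> < e0" for \<epsilon>
  proof -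
    have pos: "1 + SH + CE > 0" using SH0 CE0 by linarith
    have e1: "\<epsilon> * (1 + SH + CE) < 1" using e(2) pos unfolding e0_def by (simp add: pos_less_divide_eq)
    have "\<epsilon> * SH \<le> \<epsilon> * (1 + SH + CE)" using e(1) CE0 by (intro mult_left_mono) auto
    then have h1: "\<epsilon> * SH \<le> 1" using e1 by linarith
    have "\<epsilon> * 1 \<le> \<epsilon> * (1 + SH + CE)" using e(1) CE0 SH0 by (intro mult_left_mono) auto
    then have elt: "\<epsilon> < 1" using e1 by linarith
    have "\<epsilon> * CE \<le> \<epsilon> * (1 + SH + CE)" using e(1) SH0 by (intro mult_left_mono) auto
    then have ece: "\<epsilon> * CE < 1" using e1 by linarith
    have "\<epsilon>^2 * CE = \<epsilon> * (\<epsilon> * CE)" by (simp add: power2_eq_square)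
    also have "\<dots> \<le> 1 * (\<epsilon> * CE)" using elt e(1) CE0 by (intro mult_right_mono) auto
    finally have h2: "\<epsilon>^2 * CE < 1" using ece by linarith
    show ?thesis unfolding geq
      using entangled_G[OF e(1) asym_As pfn] ppt_G[of \<epsilon> v] invertible_G[of \<epsilon> v] h1 h2 e(1)
      unfolding SH_def CE_def by simp
  qed
  show ?thesis using e0pos main by blast
qed

end
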